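(* Let $X=(X_k)$ be a sequence of fuzzy numbers, $0<\beta\le1$, $m\ge0$ an integer, and $\theta=(k_r)$ a lacunary sequence. If $\limsup_r q_r<\infty$, then $S_\theta^\beta(F,\Delta^m)\subset S(F,\Delta^m)$.
   Context: A fuzzy number is a map $X:\mathbb{R}\to[0,1]$ which is normal, fuzzy convex, upper semicontinuous, with compact closure of $\{t:X(t)>0\}$; $L(\mathbb{R})$ is the set of fuzzy numbers. Level sets $[X]^\alpha=\{t:X(t)\ge\alpha\}$ ($\alpha\in(0,1]$), $[X]^0=\overline{\{t:X(t)>0\}}$, are compact intervals $[u^\alpha,v^\alpha]$. Subtraction: $[X-Y]^\alpha=[u_1^\alpha-v_2^\alpha,v_1^\alpha-u_2^\alpha]$. Metric: $d(X,Y)=\sup_{\alpha\in[0,1]}\max\{|u_1^\alpha-u_2^\alpha|,|v_1^\alpha-v_2^\alpha|\}$. $(\Delta^0X)_k=X_k$, $(\Delta^1X)_k=X_k-X_{k+1}$, $(\Delta^mX)_k=(\Delta^1(\Delta^{m-1}X))_k$. A lacunary sequence is an increasing integer sequence $\theta=(k_r)_{r\ge0}$ with $k_0=0$, $h_r=k_r-k_{r-1}\to\infty$; $I_r=(k_{r-1},k_r]$, $q_r=k_r/k_{r-1}$. $S_\theta^\beta(F,\Delta^m)$: sequences $X$ with some $X_0\in L(\mathbb{R})$ such that for all $\varepsilon>0$, $\lim_r\frac{1}{h_r^\beta}|\{k\in I_r:d(\Delta^mX_k,X_0)\ge\varepsilon\}|=0$. $S(F,\Delta^m)$: sequences $X$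 with some $X_0\in L(\mathbb{R})$ such that for all $\varepsilon>0$, $\lim_{n\to\infty}\frac{1}{n}|\{k\le n:d(\Delta^mX_k,X_0)\ge\varepsilon\}|=0$. *)

theory Defs
  imports "HOL-Analysis.Analysis"
begin

type_synonym fuzzy = "real \<Rightarrow> real"

definition fuzzy_number :: "fuzzy \<Rightarrow> bool" where
  "fuzzy_number X \<longleftrightarrow>
     (\<forall>t. 0 \<le> X t \<and> X t \<le> 1) \<and>
     (\<exists>t. X t = 1) \<and>
     (\<forall>s t l. 0 \<le> l \<and> l \<le> 1 \<longrightarrow> min (X s) (X t) \<le> X (l * s + (1 - l) * t)) \<and>
     (\<forall>t a. X t < a \<longrightarrow> (\<exists>e>0. \<forall>s. \<bar>s - t\<bar> < e \<longrightarrow> X s < a)) \<and>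
     compact (closure {t. X t > 0})"

definition level :: "fuzzy \<Rightarrow> real \<Rightarrow> real set" where
  "level X a = (if a = 0 then closure {t. X t > 0} else {t. X t \<ge> a})"

definition flo :: "fuzzy \<Rightarrow> real \<Rightarrow> real" where
  "flo X a = Inf (level X a)"

definition fhi :: "fuzzy \<Rightarrow> real \<Rightarrow> real" where
  "fhi X a = Sup (level X a)"

text \<open>Subtraction defined through its level sets
  [X - Y]^a = [flo X a - fhi Y a, fhi X a - flo Y a]: the membership value at t
  is the largest level a in (0,1] whose prescribed level interval contains t.\<close>
definition fsub :: "fuzzy \<Rightarrow> fuzzy \<Rightarrow> fuzzy" where
  "fsub X Y = (\<lambda>t. let A = {a \<in> {0<..1}. flo X a - fhi Y a \<le> t \<and> t \<le> fhi X a - flo Y a}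
                  in if A = {} then 0 else Sup A)"

fun fdelta :: "nat \<Rightarrow> (nat \<Rightarrow> fuzzy) \<Rightarrow> nat \<Rightarrow> fuzzy" where
  "fdelta 0 X = X"
| "fdelta (Suc m) X = (\<lambda>k. fsub (fdelta m X k) (fdelta m X (Suc k)))"

definition fdist :: "fuzzy \<Rightarrow> fuzzy \<Rightarrow> real" where
  "fdist X Y = (SUP a\<in>{0..1}. max \<bar>flo X a - flo Y a\<bar> \<bar>fhi X a - fhi Y a\<bar>)"

definition lacunary :: "(nat \<Rightarrow> nat) \<Rightarrow> bool" where
  "lacunary \<theta> \<longleftrightarrow> \<theta> 0 = 0 \<and> strict_mono \<theta> \<and>
     filterlim (\<lambda>r. \<theta> r - \<theta> (r - 1)) at_top sequentially"

definition lac_h :: "(nat \<Rightarrow> nat) \<Rightarrow> nat \<Rightarrow> nat" where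
  "lac_h \<theta> r = \<theta> r - \<theta> (r - 1)"

definition lac_I :: "(nat \<Rightarrow> nat) \<Rightarrow> nat \<Rightarrow> nat set" where
  "lac_I \<theta> r = {\<theta> (r - 1)<..\<theta> r}"

definition lac_q :: "(nat \<Rightarrow> nat) \<Rightarrow> nat \<Rightarrow> real" where
  "lac_q \<theta> r = real (\<theta> r) / real (\<theta> (r - 1))"

definition S_theta :: "real \<Rightarrow> (nat \<Rightarrow> nat) \<Rightarrow> nat \<Rightarrow> (nat \<Rightarrow> fuzzy) set" where
  "S_theta \<beta> \<theta> m = {X. (\<forall>k. fuzzy_number (X k)) \<and>
     (\<exists>X0. fuzzy_number X0 \<and> (\<forall>\<epsilon>>0.
        (\<lambda>r. real (card {k \<in> lac_I \<theta> r. fdist (fdelta m X k) X0 \<ge> \<epsilon>}) / (real (lac_h \<theta> r) powr \<beta>))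
          \<longlonglongrightarrow> 0))}"

definition S_stat :: "nat \<Rightarrow> (nat \<Rightarrow> fuzzy) set" where
  "S_stat m = {X. (\<forall>k. fuzzy_number (X k)) \<and>
     (\<exists>X0. fuzzy_number X0 \<and> (\<forall>\<epsilon>>0.
        (\<lambda>n. real (card {k \<in> {1..n}. fdist (fdelta m X k) X0 \<ge> \<epsilon>}) / real n) \<longlonglongrightarrow> 0))}"

end

theory Submission
  imports Defs
begin

lemma theta_facts:
  assumes "lacunary \<theta>"
  shows "\<theta> 0 = 0" "strict_mono \<theta>" "\<And>n. n \<le> \<theta> n"
  using assms seq_suble unfolding lacunary_def by auto

lemma step1:
  fixes P :: "nat \<Rightarrow> bool"
  assumes lac: "lacunary \<theta>" and b: "0 < \<beta>" "\<beta> \<le> 1"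
    and lim: "(\<lambda>r. real (card {k \<in> lac_I \<theta> r. P k}) / (real (lac_h \<theta> r) powr \<beta>)) \<longlonglongrightarrow> 0"
  shows "(\<lambda>r. real (card {k \<in> lac_I \<theta> r. P k}) / real (lac_h \<theta> r)) \<longlonglongrightarrow> 0"
proof (rule tendsto_sandwich[OF _ _ tendsto_const lim])
  show "\<forall>\<^sub>F r in sequentially. 0 \<le> real (card {k \<in> lac_I \<theta> r. P k}) / real (lac_h \<theta> r)"
    by simp
  have sm: "strict_mono \<theta>" using lac unfolding lacunary_def by auto
  have "real (card {k \<in> lac_I \<theta> r. P k}) / real (lac_h \<theta> r)
      \<le> real (card {k \<in> lac_I \<theta> r. P k}) / (real (lac_h \<theta> r) powr \<beta>)" if "r \<ge> 1" for r
  proof -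
    have "\<theta> (r-1) < \<theta> r" using sm that by (simp add: strict_mono_less)
    then have h1: "real (lac_h \<theta> r) \<ge> 1" unfolding lac_h_def by simp
    have "real (lac_h \<theta> r) powr \<beta> \<le> real (lac_h \<theta> r) powr 1"
      using h1 b by (intro powr_mono) auto
    then have "real (lac_h \<theta> r) powr \<beta> \<le> real (lac_h \<theta> r)" using h1 by simp
    moreover have "real (lac_h \<theta> r) powr \<beta> > 0" using h1 by simp
    ultimately show ?thesis by (intro divide_left_mono) auto
  qed
  then show "\<forall>\<^sub>F r in sequentially. real (card {k \<in> lac_I \<theta> r. P k}) / real (lac_h \<theta> r)
      \<le> real (card {k \<in> lac_I \<theta> r. P k}) / (real (lac_h \<theta> r) powr \<beta>)"
    unfolding eventually_sequentially by blast
qed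

definition NN :: "(nat \<Rightarrow> nat) \<Rightarrow> (nat \<Rightarrow> bool) \<Rightarrow> nat \<Rightarrow> nat" where
  "NN \<theta> P r = card {k \<in> {1..\<theta> r}. P k}"

lemma NN_Suc:
  assumes "strict_mono \<theta>"
  shows "NN \<theta> P (Suc r) = NN \<theta> P r + card {k \<in> lac_I \<theta> (Suc r). P k}"
proof -
  have le: "\<theta> r \<le> \<theta> (Suc r)" using assms by (simp add: strict_mono_leD)
  have "{k \<in> {1..\<theta> (Suc r)}. P k} = {k \<in> {1..\<theta> r}. P k} \<union> {k \<in> lac_I \<theta> (Suc r). P k}"
    using le unfolding lac_I_def by auto
  moreover have "{k \<in> {1..\<theta> r}. P k} \<inter> {k \<in> lac_I \<theta> (Suc r). P k} = {}"
    unfolding lac_I_def by auto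
  ultimately show ?thesis unfolding NN_def
    by (simp add: card_Un_disjoint lac_I_def)
qed

lemma step2:
  assumes lac: "lacunary \<theta>"
    and t: "(\<lambda>r. real (card {k \<in> lac_I \<theta> r. P k}) / real (lac_h \<theta> r)) \<longlonglongrightarrow> 0"
  shows "(\<lambda>r. real (NN \<theta> P r) / real (\<theta> r)) \<longlonglongrightarrow> 0"
proof (rule LIMSEQ_I)
  fix e :: real assume e: "0 < e"
  have sm: "strict_mono \<theta>" and ge: "\<And>n. n \<le> \<theta> n" using theta_facts[OF lac] by auto
  obtain R0 where R0: "\<forall>j\<ge>R0. norm (real (card {k \<in> lac_I \<theta> j. P k}) / real (lac_h \<theta> j) - 0) < e/2"
    using LIMSEQ_D[OF t, of "e/2"] e by auto
  define R where "R = R0"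
  have R: "\<bar>real (card {k \<in> lac_I \<theta> j. P k}) / real (lac_h \<theta> j)\<bar> < e/2" if "j \<ge> R" for j
    using R0 that unfolding R_def by auto
  have ind: "real (NN \<theta> P r) \<le> real (NN \<theta> P R) + e/2 * (real (\<theta> r) - real (\<theta> R))"
    if "r \<ge> R" for r
    using that
  proof (induction r rule: dec_induct)
    case base then show ?case by simp
  next
    case (step n)
    have lt: "\<theta> n < \<theta> (Suc n)" using sm by (simp add: strict_mono_less)
    have hpos: "real (lac_h \<theta> (Suc n)) > 0" using lt unfolding lac_h_def by simp
    have "real (card {k \<in> lac_I \<theta> (Suc n). P k}) / real (lac_h \<theta> (Suc n)) < e/2"
      using R[of "Suc n"] step by auto
    then have c: "real (card {k \<in> lac_I \<theta> (Suc n). P k}) \<le> e/2 * real (lac_h \<theta> (Suc n))"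
      using hpos by (simp add: divide_less_eq)
    have hh: "real (lac_h \<theta> (Suc n)) = real (\<theta> (Suc n)) - real (\<theta> n)"
      using lt unfolding lac_h_def by simp
    show ?case using step.IH c hh NN_Suc[OF sm, of P n] by (simp add: algebra_simps)
  qed
  define C where "C = real (NN \<theta> P R)"
  have C0: "C \<ge> 0" unfolding C_def by simp
  obtain R2 where R2: "real R2 > 2 * C / e" using reals_Archimedean2 by blast
  show "\<exists>no. \<forall>n\<ge>no. norm (real (NN \<theta> P n) / real (\<theta> n) - 0) < e"
  proof (intro exI[of _ "max (max R R2) 1"] allI impI)
    fix n assume n: "max (max R R2) 1 \<le> n"
    have tn: "real (\<theta> n) \<ge> real R2" "real (\<theta> n) \<ge> 1" using ge[of n] n by auto
    then have tpos: "real (\<theta> n) > 0" by simp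
    have a: "real (NN \<theta> P n) \<le> C + e/2 * real (\<theta> n)"
    proof -
      have "0 \<le> e/2 * real (\<theta> R)" using e by simp
      then have "e/2 * (real (\<theta> n) - real (\<theta> R)) \<le> e/2 * real (\<theta> n)"
        by (simp add: right_diff_distrib)
      then show ?thesis using ind[of n] n unfolding C_def by linarith
    qed
    have "e * real R2 \<le> e * real (\<theta> n)" using tn e by (intro mult_left_mono) auto
    moreover have "2 * C < e * real R2" using R2 e by (simp add: field_simps)
    ultimately have "C < e/2 * real (\<theta> n)" by linarith
    then have "real (NN \<theta> P n) < e * real (\<theta> n)" using a by simp
    then show "norm (real (NN \<theta> P n) / real (\<theta> n) - 0) < e"
      using tpos by (simp add: divide_less_eq)
  qed
qed


lemma step3:
  assumes lac: "lacunary \<theta>"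
    and N: "(\<lambda>r. real (NN \<theta> P r) / real (\<theta> r)) \<longlonglongrightarrow> 0"
    and Mb: "\<And>r. r \<ge> R0 \<Longrightarrow> lac_q \<theta> r \<le> M"
  shows "(\<lambda>n. real (card {k \<in> {1..n}. P k}) / real n) \<longlonglongrightarrow> 0"
proof (rule LIMSEQ_I)
  fix e :: real assume e: "0 < e"
  have t0: "\<theta> 0 = 0" and sm: "strict_mono \<theta>" and ge: "\<And>n. n \<le> \<theta> n"
    using theta_facts[OF lac] by auto
  define M' where "M' = max M 1"
  have M'1: "M' \<ge> 1" unfolding M'_def by simp
  obtain R1 where R1: "\<forall>r\<ge>R1. norm (real (NN \<theta> P r) / real (\<theta> r) - 0) < e / M'"
    using LIMSEQ_D[OF N, of "e/M'"] e M'1 by auto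
  define R where "R = max (max R0 R1) 2"
  show "\<exists>no. \<forall>n\<ge>no. norm (real (card {k \<in> {1..n}. P k}) / real n - 0) < e"
  proof (intro exI[of _ "Suc (\<theta> R)"] allI impI)
    fix n assume n: "Suc (\<theta> R) \<le> n"
    define r where "r = (LEAST r. n \<le> \<theta> r)"
    have nr: "n \<le> \<theta> r" unfolding r_def by (rule LeastI[of _ n]) (rule ge)
    have rR: "r > R"
    proof (rule ccontr)
      assume "\<not> R < r"
      then have "\<theta> r \<le> \<theta> R" using sm by (simp add: strict_mono_leD)
      then show False using n nr by simp
    qed
    have r1: "\<theta> (r-1) < n"
    proof -
      have "\<not> n \<le> \<theta> (r-1)" unfolding r_def
        by (rule not_less_Least) (use rR r_def in simp)
      then show ?thesis by simp
    qed
    have tpos: "\<theta> (r-1) > 0"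
    proof -
      have "0 < r - 1" using rR unfolding R_def by simp
      then have "\<theta> 0 < \<theta> (r-1)" using sm by (simp add: strict_mono_less)
      then show ?thesis using t0 by simp
    qed
    have npos: "real n > 0" using n by simp
    have "lac_q \<theta> r \<le> M'" using Mb[of r] rR unfolding R_def M'_def by simp
    then have "real (\<theta> r) / real (\<theta> (r-1)) \<le> M'" unfolding lac_q_def .
    then have qb: "real (\<theta> r) \<le> M' * real (\<theta> (r-1))" using tpos by (simp add: divide_le_eq)
    have trpos: "real (\<theta> r) > 0" using nr npos by simp
    have "norm (real (NN \<theta> P r) / real (\<theta> r) - 0) < e / M'" using R1 rR unfolding R_def by simp
    then have "real (NN \<theta> P r) / real (\<theta> r) < e / M'" by simp
    then have a: "real (NN \<theta> P r) < e / M' * real (\<theta> r)" using trpos by (simp add: divide_less_eq)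
    have "e / M' * real (\<theta> r) \<le> e / M' * (M' * real (\<theta> (r-1)))"
      using qb e M'1 by (intro mult_left_mono) auto
    also have "\<dots> = e * real (\<theta> (r-1))" using M'1 by simp
    also have "\<dots> \<le> e * real n" using r1 e by (intro mult_left_mono) auto
    finally have b: "real (NN \<theta> P r) < e * real n" using a by linarith
    have "card {k \<in> {1..n}. P k} \<le> NN \<theta> P r" unfolding NN_def
      using nr by (intro card_mono) auto
    then have "real (card {k \<in> {1..n}. P k}) < e * real n" using b by linarith
    then show "norm (real (card {k \<in> {1..n}. P k}) / real n - 0) < e"
      using npos by (simp add: divide_less_eq)
  qed
qed

theorem theorem2p11:
  fixes \<beta> :: real and m :: nat and \<theta> :: "nat \<Rightarrow> nat"
  assumes "0 < \<beta>" and "\<beta> \<le> 1"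
    and "lacunary \<theta>"
    and "limsup (\<lambda>r. ereal (lac_q \<theta> r)) < \<infinity>"
  shows "S_theta \<beta> \<theta> m \<subseteq> S_stat m"
proof
  obtain B where B: "limsup (\<lambda>r. ereal (lac_q \<theta> r)) < ereal B"
    using ereal_dense2[OF assms(4)] by auto
  have "eventually (\<lambda>r. ereal (lac_q \<theta> r) < ereal B) sequentially"
    by (rule Limsup_lessD[OF B])
  then obtain R0 where R0: "\<And>r. r \<ge> R0 \<Longrightarrow> lac_q \<theta> r \<le> B"
    unfolding eventually_sequentially by (auto intro: less_imp_le)
  fix X assume "X \<in> S_theta \<beta> \<theta> m"
  then obtain X0 where fz: "\<forall>k. fuzzy_number (X k)" and X0: "fuzzy_number X0"
    and L: "\<And>\<epsilon>. \<epsilon> > 0 \<Longrightarrow> (\<lambda>r. real (card {k \<in> lac_I \<theta> r. fdist (fdelta m X k) X0 \<ge> \<epsilon>}) / (real (lac_h \<theta> r) powr \<beta>))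
          \<longlonglongrightarrow> 0"
    unfolding S_theta_def by blast
  show "X \<in> S_stat m"
    unfolding S_stat_def
  proof (intro CollectI conjI exI[of _ X0] fz X0 allI impI)
    fix \<epsilon> :: real assume "\<epsilon> > 0"
    show "(\<lambda>n. real (card {k \<in> {1..n}. fdist (fdelta m X k) X0 \<ge> \<epsilon>}) / real n) \<longlonglongrightarrow> 0"
      by (rule step3[OF assms(3) step2[OF assms(3) step1[OF assms(3) assms(1) assms(2) L[OF \<open>\<epsilon> > 0\<close>]]] R0])
  qed
qed

end
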